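(* Let $\underline{T}=(T_1,\dots,T_k)$ be a tuple of contractions on a Hilbert space $\mathcal{H}$ and $q_{ij}\in\mathbb{T}$ ($1\le i<j\le k$) with $T_iT_j=q_{ij}T_jT_i$ for $i<j$, and let $u\subseteq\{1,\dots,k\}$. Then \[ S(u)=\sum_{v\subseteq u}(-1)^{|v|}(T^{e(v)})^*T^{e(v)}\ge0 \] in each of the following cases: (i) each $T_i$ is an isometry; (ii) $\|T_1\|^2+\dots+\|T_k\|^2\le1$. Here for $v=\{n_1<\dots<n_r\}$, $T^{e(v)}=T_{n_1}\cdots T_{n_r}$ and $T^{e(\emptyset)}=I$. *)

theory Defs
  imports "HOL-Analysis.Analysis"
begin

text \<open>A complex Hilbert space is modelled as a real Hilbert space (type class
real_inner + complete_space) together with a complex structure J (multiplication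
by the imaginary unit): J is real-linear, J (J x) = - x and J preserves the real
inner product.  The complex inner product is then
inner x y + i * inner x (J y), and the norm is the usual one.\<close>

definition complex_structure :: "('a::real_inner \<Rightarrow> 'a) \<Rightarrow> bool" where
  "complex_structure J \<longleftrightarrow> linear J \<and> (\<forall>x. J (J x) = - x) \<and>
     (\<forall>x y. inner (J x) (J y) = inner x y)"

definition cscale :: "('a::real_vector \<Rightarrow> 'a) \<Rightarrow> complex \<Rightarrow> 'a \<Rightarrow> 'a" where
  "cscale J c x = Re c *\<^sub>R x + Im c *\<^sub>R J x"

definition bounded_clinear_op :: "('a::real_normed_vector \<Rightarrow> 'a) \<Rightarrow> ('a \<Rightarrow> 'a) \<Rightarrow> bool" where
  "bounded_clinear_op J T \<longleftrightarrow> bounded_linear T \<and> (\<forall>x. T (J x) = J (T x))"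

definition contraction_op :: "('a::real_normed_vector \<Rightarrow> 'a) \<Rightarrow> ('a \<Rightarrow> 'a) \<Rightarrow> bool" where
  "contraction_op J T \<longleftrightarrow> bounded_clinear_op J T \<and> onorm T \<le> 1"

definition isometry_op :: "('a::real_normed_vector \<Rightarrow> 'a) \<Rightarrow> bool" where
  "isometry_op T \<longleftrightarrow> (\<forall>x. norm (T x) = norm x)"

definition multi_prod :: "(nat \<Rightarrow> 'a \<Rightarrow> 'a) \<Rightarrow> nat set \<Rightarrow> 'a \<Rightarrow> 'a" where
  "multi_prod T v = foldr (\<circ>) (map T (sorted_list_of_set v)) id"

end

theory Submission
  imports Defs
begin

lemma sorted_insert_max:
  fixes v :: "nat set"
  assumes "finite v" "\<forall>j\<in>v. j < i"
  shows "sorted_list_of_set (insert i v) = sorted_list_of_set v @ [i]"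
proof -
  have "sorted_wrt (<) (sorted_list_of_set v @ [i]) \<and> set (sorted_list_of_set v @ [i]) = insert i v
        \<and> length (sorted_list_of_set v @ [i]) = card (insert i v)"
    using assms by (auto simp: sorted_wrt_append)
  then show ?thesis using assms(1) by (metis finite_insert sorted_list_of_set_unique)
qed

lemma foldr_comp_id: "foldr (\<circ>) fs g = foldr (\<circ>) fs id \<circ> g"
  by (induct fs) auto

lemma multi_prod_insert_max:
  assumes "finite v" "\<forall>j\<in>v. j < i"
  shows "multi_prod T (insert i v) x = multi_prod T v (T i x)"
proof -
  have "multi_prod T (insert i v) x = foldr (\<circ>) (map T (sorted_list_of_set v)) (T i) x"
    unfolding multi_prod_def sorted_insert_max[OF assms] by simp
  also have "\<dots> = (foldr (\<circ>) (map T (sorted_list_of_set v)) id \<circ> T i) x"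
    by (rule arg_cong[where f="\<lambda>f. f x"], rule foldr_comp_id)
  finally show ?thesis by (simp add: multi_prod_def)
qed

definition SS :: "(nat \<Rightarrow> 'a::real_normed_vector \<Rightarrow> 'a) \<Rightarrow> nat set \<Rightarrow> 'a \<Rightarrow> real" where
  "SS T u x = (\<Sum>v\<in>Pow u. (-1) ^ card v * (norm (multi_prod T v x))\<^sup>2)"

lemma SS_empty: "SS T {} x = (norm x)\<^sup>2"
  by (simp add: SS_def multi_prod_def)

lemma SS_insert:
  assumes "finite A" "\<forall>j\<in>A. j < b"
  shows "SS T (insert b A) x = SS T A x - SS T A (T b x)"
proof -
  have bA: "b \<notin> A" using assms by auto
  have inj: "inj_on (insert b) (Pow A)"
  proof (rule inj_onI)
    fix X Y assume X: "X \<in> Pow A" and Y: "Y \<in> Pow A" and e: "insert b X = insert b Y"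
    have "X = insert b X - {b}" using X bA by auto
    also have "\<dots> = insert b Y - {b}" using e by simp
    also have "\<dots> = Y" using Y bA by auto
    finally show "X = Y" .
  qed
  have fin: "finite (Pow A)" using assms by simp
  have disj: "Pow A \<inter> insert b ` Pow A = {}" using bA by auto
  have s1: "SS T (insert b A) x = (\<Sum>v\<in>Pow A. (-1) ^ card v * (norm (multi_prod T v x))\<^sup>2)
     + (\<Sum>v\<in>insert b ` Pow A. (-1) ^ card v * (norm (multi_prod T v x))\<^sup>2)"
    unfolding SS_def Pow_insert by (rule sum.union_disjoint[OF fin finite_imageI[OF fin] disj])
  have s2: "(\<Sum>v\<in>insert b ` Pow A. (-1) ^ card v * (norm (multi_prod T v x))\<^sup>2)
     = (\<Sum>v\<in>Pow A. (-1) ^ card (insert b v) * (norm (multi_prod T (insert b v) x))\<^sup>2)"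
    unfolding sum.reindex[OF inj] comp_def by (rule refl)
  also have "\<dots> = (\<Sum>v\<in>Pow A. - ((-1) ^ card v * (norm (multi_prod T v (T b x)))\<^sup>2))"
  proof (rule sum.cong)
    fix v assume "v \<in> Pow A"
    then have v: "v \<subseteq> A" by auto
    have fv: "finite v" by (rule finite_subset[OF v assms(1)])
    have bv: "b \<notin> v" using v bA by auto
    have "card (insert b v) = Suc (card v)" by (rule card_insert_disjoint[OF fv bv])
    moreover have "multi_prod T (insert b v) x = multi_prod T v (T b x)"
    proof -
      have "\<forall>j\<in>v. j < b" using v assms by auto
      then show ?thesis by (rule multi_prod_insert_max[OF fv])
    qed
    ultimately show "(-1) ^ card (insert b v) * (norm (multi_prod T (insert b v) x))\<^sup>2
        = - ((-1) ^ card v * (norm (multi_prod T v (T b x)))\<^sup>2)" by simp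
  qed (rule refl)
  finally have s3: "(\<Sum>v\<in>insert b ` Pow A. (-1) ^ card v * (norm (multi_prod T v x))\<^sup>2)
     = - SS T A (T b x)" unfolding SS_def sum_negf .
  show ?thesis using s1 s3 unfolding SS_def by simp
qed

lemma iso_case:
  assumes "finite u" "\<forall>i\<in>u. isometry_op (T i)"
  shows "\<forall>x. SS T u x = (if u = {} then (norm x)\<^sup>2 else 0)"
  using assms
proof (induct u rule: finite_linorder_max_induct)
  case empty
  then show ?case by (simp add: SS_empty)
next
  case (insert b A)
  have "norm (T b x) = norm x" for x using insert(4) by (simp add: isometry_op_def)
  then show ?case using insert by (simp add: SS_insert)
qed

lemma norm_case:
  fixes T :: "nat \<Rightarrow> 'a::real_normed_vector \<Rightarrow> 'a"
  assumes "finite u" "\<forall>i\<in>u. bounded_linear (T i)"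
    "(\<Sum>i\<in>u. (onorm (T i))\<^sup>2) \<le> 1"
  shows "\<forall>x. (1 - (\<Sum>i\<in>u. (onorm (T i))\<^sup>2)) * (norm x)\<^sup>2 \<le> SS T u x \<and> SS T u x \<le> (norm x)\<^sup>2"
  using assms
proof (induct u rule: finite_linorder_max_induct)
  case empty
  then show ?case by (simp add: SS_empty)
next
  case (insert b A)
  have bA: "b \<notin> A" using insert by auto
  have sumi: "(\<Sum>i\<in>insert b A. (onorm (T i))\<^sup>2) = (onorm (T b))\<^sup>2 + (\<Sum>i\<in>A. (onorm (T i))\<^sup>2)"
    using bA insert(1) by simp
  have sA: "(\<Sum>i\<in>A. (onorm (T i))\<^sup>2) \<le> 1" using insert(5) sumi zero_le_power2[of "onorm (T b)"] by linarith
  have IH: "\<forall>x. (1 - (\<Sum>i\<in>A. (onorm (T i))\<^sup>2)) * (norm x)\<^sup>2 \<le> SS T A x \<and> SS T A x \<le> (norm x)\<^sup>2"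
    using insert(3) insert(4) sA by blast
  have bl: "bounded_linear (T b)" using insert by auto
  show ?case
  proof
    fix x
    have n1: "norm (T b x) \<le> onorm (T b) * norm x" using onorm[OF bl] .
    have "(norm (T b x))\<^sup>2 \<le> (onorm (T b) * norm x)\<^sup>2"
      using n1 by (simp add: power_mono)
    then have n2: "(norm (T b x))\<^sup>2 \<le> (onorm (T b))\<^sup>2 * (norm x)\<^sup>2" by (simp add: power_mult_distrib)
    have e: "SS T (insert b A) x = SS T A x - SS T A (T b x)"
      using SS_insert insert by blast
    have h1: "(1 - (\<Sum>i\<in>A. (onorm (T i))\<^sup>2)) * (norm x)\<^sup>2 \<le> SS T A x" using IH by blast
    have h2: "SS T A (T b x) \<le> (norm (T b x))\<^sup>2" using IH by blast
    have h3: "(1 - (\<Sum>i\<in>A. (onorm (T i))\<^sup>2)) * (norm (T b x))\<^sup>2 \<le> SS T A (T b x)" using IH by blast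
    have h4: "0 \<le> (1 - (\<Sum>i\<in>A. (onorm (T i))\<^sup>2)) * (norm (T b x))\<^sup>2" using sA by simp
    have h5: "SS T A x \<le> (norm x)\<^sup>2" using IH by blast
    show "(1 - (\<Sum>i\<in>insert b A. (onorm (T i))\<^sup>2)) * (norm x)\<^sup>2 \<le> SS T (insert b A) x \<and>
          SS T (insert b A) x \<le> (norm x)\<^sup>2"
    proof -
      have eq: "(1 - ((onorm (T b))\<^sup>2 + (\<Sum>i\<in>A. (onorm (T i))\<^sup>2))) * (norm x)\<^sup>2
        = (1 - (\<Sum>i\<in>A. (onorm (T i))\<^sup>2)) * (norm x)\<^sup>2 - (onorm (T b))\<^sup>2 * (norm x)\<^sup>2"
        by (simp add: algebra_simps)
      show ?thesis unfolding e sumi eq using h1 h2 h3 h4 h5 n2 by linarith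
    qed
  qed
qed

theorem lemma4p6:
  fixes J :: "'a::{real_inner, complete_space} \<Rightarrow> 'a"
    and k :: nat
    and T :: "nat \<Rightarrow> 'a \<Rightarrow> 'a"
    and q :: "nat \<Rightarrow> nat \<Rightarrow> complex"
    and u :: "nat set"
  assumes J: "complex_structure J"
    and contr: "\<forall>i\<in>{1..k}. contraction_op J (T i)"
    and q_unit: "\<forall>i j. 1 \<le> i \<and> i < j \<and> j \<le> k \<longrightarrow> cmod (q i j) = 1"
    and comm: "\<forall>i j. 1 \<le> i \<and> i < j \<and> j \<le> k \<longrightarrow>
                 (\<forall>x. T i (T j x) = cscale J (q i j) (T j (T i x)))"
    and u: "u \<subseteq> {1..k}"
    and cases: "(\<forall>i\<in>{1..k}. isometry_op (T i)) \<or> (\<Sum>i=1..k. (onorm (T i))\<^sup>2) \<le> 1"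
  shows "\<forall>x. (\<Sum>v\<in>Pow u. (-1) ^ card v * (norm (multi_prod T v x))\<^sup>2) \<ge> (0::real)"
proof
  fix x
  have fu: "finite u" using u finite_subset by blast
  show "(\<Sum>v\<in>Pow u. (-1) ^ card v * (norm (multi_prod T v x))\<^sup>2) \<ge> (0::real)"
    using cases
  proof
    assume "\<forall>i\<in>{1..k}. isometry_op (T i)"
    then have "\<forall>i\<in>u. isometry_op (T i)" using u by auto
    from iso_case[OF fu this] have "0 \<le> SS T u x" by simp
    then show ?thesis by (simp add: SS_def)
  next
    assume s: "(\<Sum>i=1..k. (onorm (T i))\<^sup>2) \<le> 1"
    have su: "(\<Sum>i\<in>u. (onorm (T i))\<^sup>2) \<le> (\<Sum>i=1..k. (onorm (T i))\<^sup>2)"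
      using u by (intro sum_mono2) auto
    have bl: "\<forall>i\<in>u. bounded_linear (T i)" using u contr
      by (auto simp: contraction_op_def bounded_clinear_op_def)
    have "(1 - (\<Sum>i\<in>u. (onorm (T i))\<^sup>2)) * (norm x)\<^sup>2 \<le> SS T u x"
    proof -
      have "(\<Sum>i\<in>u. (onorm (T i))\<^sup>2) \<le> 1" using su s by linarith
      from norm_case[OF fu bl this] show ?thesis by blast
    qed
    moreover have "0 \<le> (1 - (\<Sum>i\<in>u. (onorm (T i))\<^sup>2)) * (norm x)\<^sup>2" using su s by simp
    ultimately have "0 \<le> SS T u x" by linarith
    then show ?thesis by (simp add: SS_def)
  qed
qed

end
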